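(* Let $X\subseteq\mathbb{R}^k$ be a set of feasible alternatives, $\mathbf{f}=(f_1,f_2):X\to\mathbb{R}^2$ a vector criterion and $Y=\mathbf{f}(X)$. Consider three decision makers whose preference relations $\succ_1,\succ_2,\succ_3$ on $\mathbb{R}^2$ are cone relations with cones $K_1,K_2,K_3$, each $K_l$ being a convex pointed cone with $\mathbb{R}^2_+\subseteq K_l$ and $\mathbf{0}_2\notin K_l$. Suppose that vectors $$\mathbf{y}^{(1)}=\begin{pmatrix} w_1^{(1)}\\ -w_2^{(1)}\end{pmatrix},\quad \mathbf{y}^{(2)}=\begin{pmatrix} w_1^{(2)}\\ -w_2^{(2)}\end{pmatrix},\quad \mathbf{y}^{(3)}=\begin{pmatrix} -w_1^{(3)}\\ w_2^{(3)}\end{pmatrix},$$ with all $w_i^{(l)}>0$, are given such that $\mathbf{y}^{(1)}\succ_1\mathbf{0}_2$, $\mathbf{y}^{(2)}\succ_2\mathbf{0}_2$, $\mathbf{y}^{(3)}\succ_3\mathbf{0}_2$, and $\mathbf{y}^{(1)}$ and $\mathbf{y}^{(2)}$ are not codirectional. Put $W(1,2)=w_1^{(1)}w_2^{(2)}-w_2^{(1)}w_1^{(2)}$. Define the vector criterion $\mathbf{g}=(g_1,g_2)$ on $X$ by $g_1=f_1$ and $g_2=w_2^{(1)}f_1+w_1^{(1)}f_2$ if $W(1,2)>0$, respectively $g_2=w_2^{(2)}f_1+w_1^{(2)}f_2$ if $W(1,2)<0$. Then $\hat P_{\mathbf{g}}(Y)\subseteq P(Y)$, where $\hat P_{\mathb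f{g}}(Y)=\mathbf{f}(P_{\mathbf{g}}(X))$.
   Context: For $\mathbf{a},\mathbf{b}\in\mathbb{R}^m$, $\mathbf{a}\geq\mathbf{b}$ means $a_i\ge b_i$ for all $i$ and $\mathbf{a}\neq\mathbf{b}$; $\mathbb{R}^m_+=\{\mathbf{y}\in\mathbb{R}^m:\mathbf{y}\geq\mathbf{0}_m\}$. A binary relation $\mathfrak{R}$ on $\mathbb{R}^m$ is a cone relation with cone $K$ if $\mathbf{y}^{(1)}\mathfrak{R}\,\mathbf{y}^{(2)}\iff \mathbf{y}^{(1)}-\mathbf{y}^{(2)}\in K$. The Pareto set is $P(Y)=\{\mathbf{y}^*\in Y:\ \nexists\,\mathbf{y}\in Y,\ \mathbf{y}\geq\mathbf{y}^*\}$, and for a vector criterion $\mathbf{g}$ on $X$, $P_{\mathbf{g}}(X)=\{\mathbf{x}^*\in X:\ \nexists\,\mathbf{x}\in X,\ \mathbf{g}(\mathbf{x})\geq\mathbf{g}(\mathbf{x}^* )\}$. Two vectors are codirectional if one is a positive multiple of the other. *)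

theory Defs
  imports "HOL-Analysis.Analysis"
begin

definition vgeq :: "real^'m \<Rightarrow> real^'m \<Rightarrow> bool" where
  "vgeq a b \<longleftrightarrow> (\<forall>i. a $ i \<ge> b $ i) \<and> a \<noteq> b"

definition nonneg_orthant :: "(real^'m) set" where
  "nonneg_orthant = {y. vgeq y 0}"

definition cone_rel :: "(real^'m) set \<Rightarrow> real^'m \<Rightarrow> real^'m \<Rightarrow> bool" where
  "cone_rel K y1 y2 \<longleftrightarrow> y1 - y2 \<in> K"

definition convex_pointed_cone :: "(real^'m) set \<Rightarrow> bool" where
  "convex_pointed_cone K \<longleftrightarrow>
     (\<forall>x\<in>K. \<forall>c>0. c *\<^sub>R x \<in> K) \<and> convex K \<and> K \<inter> uminus ` K \<subseteq> {0}"

definition pareto_set :: "(real^'m) set \<Rightarrow> (real^'m) set" where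
  "pareto_set Y = {ys \<in> Y. \<not> (\<exists>y\<in>Y. vgeq y ys)}"

definition pareto_set_crit :: "('a \<Rightarrow> real^'m) \<Rightarrow> 'a set \<Rightarrow> 'a set" where
  "pareto_set_crit g X = {xs \<in> X. \<not> (\<exists>x\<in>X. vgeq (g x) (g xs))}"

definition codirectional :: "real^'m \<Rightarrow> real^'m \<Rightarrow> bool" where
  "codirectional a b \<longleftrightarrow> (\<exists>c>0. a = c *\<^sub>R b) \<or> (\<exists>c>0. b = c *\<^sub>R a)"

end

theory Submission
  imports Defs
begin

theorem theorem2:
  fixes X :: "(real^'k) set"
    and f g :: "real^'k \<Rightarrow> real^2"
    and K1 K2 K3 :: "(real^2) set"
    and y1 y2 y3 :: "real^2"
    and w11 w21 w12 w22 w13 w23 :: real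
  assumes cones: "\<forall>K\<in>{K1, K2, K3}. convex_pointed_cone K \<and> nonneg_orthant \<subseteq> K \<and> 0 \<notin> K"
    and wpos: "w11 > 0" "w21 > 0" "w12 > 0" "w22 > 0" "w13 > 0" "w23 > 0"
    and y1: "y1 $ 1 = w11" "y1 $ 2 = - w21"
    and y2: "y2 $ 1 = w12" "y2 $ 2 = - w22"
    and y3: "y3 $ 1 = - w13" "y3 $ 2 = w23"
    and pref: "cone_rel K1 y1 0" "cone_rel K2 y2 0" "cone_rel K3 y3 0"
    and ncod: "\<not> codirectional y1 y2"
    and g1: "\<forall>x\<in>X. g x $ 1 = f x $ 1"
    and gpos: "w11 * w22 - w21 * w12 > 0 \<Longrightarrow> \<forall>x\<in>X. g x $ 2 = w21 * f x $ 1 + w11 * f x $ 2"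
    and gneg: "w11 * w22 - w21 * w12 < 0 \<Longrightarrow> \<forall>x\<in>X. g x $ 2 = w22 * f x $ 1 + w12 * f x $ 2"
  shows "f ` pareto_set_crit g X \<subseteq> pareto_set (f ` X)"
proof -
  have W: "w11 * w22 - w21 * w12 \<noteq> 0"
  proof
    assume h: "w11 * w22 - w21 * w12 = 0"
    have "y1 = (w11 / w12) *\<^sub>R y2"
      using h wpos y1 y2 by (simp add: vec_eq_iff forall_2 field_simps)
    moreover have "w11 / w12 > 0" using wpos by simp
    ultimately show False using ncod unfolding codirectional_def by blast
  qed
  obtain a b where ab: "a > 0" "b > 0" "\<forall>x\<in>X. g x $ 2 = a * f x $ 1 + b * f x $ 2"
  proof (cases "w11 * w22 - w21 * w12 > 0")
    case True then show ?thesis using that gpos wpos by blast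
  next
    case False then have "w11 * w22 - w21 * w12 < 0" using W by linarith
    then show ?thesis using that gneg wpos by blast
  qed
  show ?thesis
  proof
    fix z assume "z \<in> f ` pareto_set_crit g X"
    then obtain xs where xs: "xs \<in> X" "z = f xs" "\<not> (\<exists>x\<in>X. vgeq (g x) (g xs))"
      unfolding pareto_set_crit_def by blast
    have "\<not> (\<exists>y\<in>f ` X. vgeq y (f xs))"
    proof
      assume "\<exists>y\<in>f ` X. vgeq y (f xs)"
      then obtain x where x: "x \<in> X" "vgeq (f x) (f xs)" by blast
      have c: "f x $ 1 \<ge> f xs $ 1" "f x $ 2 \<ge> f xs $ 2" "f x $ 1 \<noteq> f xs $ 1 \<or> f x $ 2 \<noteq> f xs $ 2"
        using x(2) unfolding vgeq_def by (auto simp: vec_eq_iff forall_2)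
      have m: "a * f x $ 1 \<ge> a * f xs $ 1" "b * f x $ 2 \<ge> b * f xs $ 2"
        using c ab by auto
      have le: "a * f xs $ 1 + b * f xs $ 2 \<le> a * f x $ 1 + b * f x $ 2" using m by linarith
      have ne: "a * f x $ 1 + b * f x $ 2 \<noteq> a * f xs $ 1 + b * f xs $ 2"
        using c ab by (smt (verit) mult_strict_left_mono)
      have "vgeq (g x) (g xs)"
        using c le ne ab x(1) xs(1) g1 unfolding vgeq_def by (auto simp: vec_eq_iff forall_2)
      then show False using xs x by blast
    qed
    then show "z \<in> pareto_set (f ` X)" using xs unfolding pareto_set_def by blast
  qed
qed

end
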